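(* Let $N\in\mathbb N$, $F=\mathbb Z/N\mathbb Z$, $k\in\mathbb N$ and $m_1,\ldots,m_{2k}\in\mathbb N$ with $\sum_{\ell=1}^{2k}m_\ell=N$. Let $\sigma\in G_F$ be the configuration $\sigma=(1)^{m_1}(-1)^{m_2}\cdots(1)^{m_{2k-1}}(-1)^{m_{2k}}$, i.e. reading $\sigma_1,\sigma_2,\ldots,\sigma_N$ one sees $m_1$ entries $1$, then $m_2$ entries $-1$, etc. Then, with indices of the $m_j$ taken in $\mathbb Z/2k\mathbb Z$, \[\Delta A_F(\sigma)=\sum_{\ell=1}^{2k}\sum_{n=1}^{k}\Big(\delta_{m_\ell+\cdots+m_{\ell+2n-2}}-\delta_{m_\ell+\cdots+m_{\ell+2n-1}}\Big).\]
   Context: $G_F=\{-1,1\}^F$ (with $N\equiv0$ in $F$), $A_F(\sigma)_f=\sum_{j\in F}\sigma_j\sigma_{j+f}$, $(\Delta h)_f=\frac14(h_{f-1}-2h_f+h_{f+1})$ for $h\in\mathbb R^F$, and for an integer $x$, $\delta_x\in\mathbb R^F$ is the indicator function of the residue class $x\bmod N$. *)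

theory Defs
  imports Main "HOL.Real"
begin

text \<open>Functions on F = Z/NZ are represented as functions on int, read modulo N
  (they are only ever evaluated through residues / are N-periodic).\<close>

definition corrA :: "nat \<Rightarrow> (int \<Rightarrow> real) \<Rightarrow> int \<Rightarrow> real" where
  "corrA N \<sigma> f = (\<Sum>j\<in>{0..<int N}. \<sigma> j * \<sigma> (j + f))"

definition lapl :: "(int \<Rightarrow> real) \<Rightarrow> int \<Rightarrow> real" where
  "lapl h f = (h (f - 1) - 2 * h f + h (f + 1)) / 4"

definition deltaF :: "nat \<Rightarrow> int \<Rightarrow> int \<Rightarrow> real" where
  "deltaF N x f = (if f mod int N = x mod int N then 1 else 0)"

text \<open>index of m taken in Z/2kZ, with representatives 1..2k\<close>
definition cyc :: "nat \<Rightarrow> int \<Rightarrow> nat" where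
  "cyc k l = nat ((l - 1) mod int (2 * k) + 1)"

definition segsum :: "nat \<Rightarrow> (nat \<Rightarrow> nat) \<Rightarrow> nat \<Rightarrow> nat \<Rightarrow> int" where
  "segsum k m l r = (\<Sum>i<r. int (m (cyc k (int l + int i))))"

end

theory Submission
  imports Defs
begin

lemma per_nat: assumes "\<And>x. h (x + p) = h x" shows "h (x + int n * p) = h (x::int)"
proof (induction n)
  case 0 then show ?case by simp
next
  case (Suc n)
  have "h (x + int (Suc n) * p) = h ((x + int n * p) + p)" by (simp add: algebra_simps)
  also have "\<dots> = h x" using assms Suc by simp
  finally show ?case .
qed

lemma per_mult: assumes "\<And>x. h (x + p) = h x" shows "h (x + t * p) = h (x::int)"
proof (cases "t \<ge> 0")
  case True
  then obtain n where "t = int n" by (metis nonneg_eq_int)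
  then show ?thesis using per_nat[where h=h and p=p, OF assms] by simp
next
  case False
  define n where "n = nat (- t)"
  have n: "t = - int n" using False n_def by simp
  have "h ((x + t*p) + int n * p) = h (x + t*p)" by (rule per_nat[where h=h and p=p, OF assms])
  then show ?thesis using n by (simp add: algebra_simps)
qed

lemma shift1: assumes "\<And>x. h (x + p) = h x" "0 \<le> p"
  shows "(\<Sum>j\<in>{0..<p}. h (j+1)) = (\<Sum>j\<in>{0..<p::int}. h j)"
proof (cases "p = 0")
  case True then show ?thesis by simp
next
  case False
  have "(\<Sum>j\<in>{0..<p}. h (j+1)) = (\<Sum>j\<in>{1..<p+1}. h j)"
    by (rule sum.reindex_bij_witness[where i="\<lambda>j. j - 1" and j="\<lambda>j. j+1"]) auto
  also have "{1..<p+1} = insert p {1..<p}" using assms(2) False by auto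
  also have "(\<Sum>j\<in>insert p {1..<p}. h j) = h p + (\<Sum>j\<in>{1..<p}. h j)" by simp
  also have "h p = h 0" using assms(1)[of 0] by simp
  also have "h 0 + (\<Sum>j\<in>{1..<p}. h j) = (\<Sum>j\<in>insert 0 {1..<p}. h j)" by simp
  also have "insert 0 {1..<p} = {0..<p}" using assms(2) False by auto
  finally show ?thesis .
qed

lemma shift_nat: assumes "\<And>x. h (x + p) = h x" "0 \<le> p"
  shows "(\<Sum>j\<in>{0..<p}. h (j + int n)) = (\<Sum>j\<in>{0..<p::int}. h j)"
  using assms(1)
proof (induction n arbitrary: h)
  case 0 then show ?case by simp
next
  case (Suc n)
  have "(\<Sum>j\<in>{0..<p}. h (j + int (Suc n))) = (\<Sum>j\<in>{0..<p}. (\<lambda>y. h (y + 1)) (j + int n))"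
    by (simp add: algebra_simps)
  also have "\<dots> = (\<Sum>j\<in>{0..<p}. h (j + 1))"
    by (rule Suc.IH) (metis Suc.prems add.commute add.left_commute)
  also have "\<dots> = (\<Sum>j\<in>{0..<p}. h j)" by (rule shift1[where h=h and p=p, OF Suc.prems assms(2)])
  finally show ?case .
qed

lemma shift: assumes "\<And>x. h (x + p) = h x" "0 \<le> p"
  shows "(\<Sum>j\<in>{0..<p}. h (j + a)) = (\<Sum>j\<in>{0..<p::int}. h j)"
proof (cases "a \<ge> 0")
  case True
  then obtain n where "a = int n" by (metis nonneg_eq_int)
  then show ?thesis using shift_nat[where h=h and p=p, OF assms] by simp
next
  case False
  define n where "n = nat (- a)"
  have n: "a = - int n" using False n_def by simp
  have "(\<Sum>j\<in>{0..<p}. (\<lambda>y. h (y - int n)) (j + int n)) = (\<Sum>j\<in>{0..<p}. h (j - int n))"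
  proof (rule shift_nat[OF _ assms(2)])
    fix x show "h (x + p - int n) = h (x - int n)" using assms(1)[of "x - int n"] by (simp add: algebra_simps)
  qed
  then show ?thesis using n by simp
qed

lemma nat_to_int: "(\<Sum>l=1..n. g (int l)) = (\<Sum>j\<in>{0..<int n}. g (j+1))"
proof (induction n)
  case 0 then show ?case by simp
next
  case (Suc n)
  have "{0..<int (Suc n)} = insert (int n) {0..<int n}" by auto
  then show ?case using Suc by (simp add: add.commute)
qed

lemma alt: "(\<Sum>l=1..n. 2*(-1)^l :: real) = (-1)^n - 1"
  by (induction n) auto

lemma alt2: "(\<Sum>n=1..k. a(2*n-1) - a(2*n)) = (\<Sum>r=1..2*k. (-1)^(r+1) * (a r :: real))"
proof (induction k)
  case 0 then show ?case by simp
next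
  case (Suc k)
  have "{1..2*Suc k} = insert (2*k+2) (insert (2*k+1) {1..2*k})" by auto
  then show ?case using Suc by simp
qed

lemma delta_sum:
  assumes "0 < N"
  shows "(\<Sum>j\<in>{0..<int N}. (if j mod int N = a mod int N then 1 else 0) *
     (if (j+f) mod int N = b mod int N then 1 else 0)) = deltaF N (b - a) f"
proof -
  have "(\<Sum>j\<in>{0..<int N}. (if j mod int N = a mod int N then 1 else 0) *
     (if (j+f) mod int N = b mod int N then 1 else 0) :: real) =
    (\<Sum>j\<in>{0..<int N}. if j = a mod int N then (if (a mod int N + f) mod int N = b mod int N then 1 else 0) else 0)"
    by (rule sum.cong) auto
  also have "\<dots> = (if (a mod int N + f) mod int N = b mod int N then 1 else 0)"
    using assms by (subst sum.delta) auto
  also have "((a mod int N + f) mod int N = b mod int N) = (f mod int N = (b - a) mod int N)"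
    by (metis add.commute diff_diff_eq mod_add_left_eq mod_eq_dvd_iff)
  finally show ?thesis by (simp add: deltaF_def)
qed


theorem mainTheorem9:
  fixes N k :: nat and m :: "nat \<Rightarrow> nat" and \<sigma> :: "int \<Rightarrow> real"
  assumes N_pos: "0 < N"
    and m_sum: "(\<Sum>l=1..2*k. m l) = N"
    and periodic: "\<And>j. \<sigma> (j + int N) = \<sigma> j"
    and blocks: "\<And>l j. l \<in> {1..2*k} \<Longrightarrow> int (\<Sum>i=1..l-1. m i) < j \<Longrightarrow>
                    j \<le> int (\<Sum>i=1..l. m i) \<Longrightarrow> \<sigma> j = (-1) ^ (l + 1)"
  shows "lapl (corrA N \<sigma>) =
    (\<lambda>f. \<Sum>l=1..2*k. \<Sum>n=1..k.
        deltaF N (segsum k m l (2*n - 1)) f - deltaF N (segsum k m l (2*n)) f)"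
proof -
  have k_pos: "k > 0" using m_sum N_pos by (cases k) auto
  define P where "P l = int (\<Sum>i=1..l. m i)" for l :: nat
  have P_mono: "P a \<le> P b" if "a \<le> b" for a b
    unfolding P_def using that by (simp add: sum_mono2)
  have P0: "P 0 = 0" by (simp add: P_def)
  have PK: "P (2*k) = int N" using m_sum by (simp add: P_def)
  have P_bnd: "0 \<le> P l \<and> P l \<le> int N" if "l \<le> 2*k" for l
    using P_mono[OF that] PK by (simp add: P_def sum_nonneg)
  define S where "S = {1..2*k}"
  define c where "c l = 2 * (-1::real)^l" for l :: nat
  have sumc: "(\<Sum>l\<in>S. c l) = 0" unfolding S_def c_def alt by simp
  define g where "g j = 1 + (\<Sum>l\<in>S. if P l < j then c l else 0)" for j :: int
  have sig_g: "\<sigma> j = g j" if "1 \<le> j" "j \<le> int N" for j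
  proof -
    define l where "l = (LEAST l. j \<le> P l)"
    have l1: "j \<le> P l" unfolding l_def by (rule LeastI[of _ "2*k"]) (use PK that in simp)
    have l2: "l \<le> 2*k" unfolding l_def by (rule Least_le) (use PK that in simp)
    have l3: "l \<ge> 1" using l1 P0 that by (cases l) auto
    have l4: "P (l-1) < j" using not_less_Least[of "l-1" "\<lambda>l. j \<le> P l"] l3 unfolding l_def[symmetric] by linarith
    have "\<sigma> j = (-1)^(l+1)" using blocks[of l j] l1 l2 l3 l4 by (simp add: P_def)
    also have "(\<Sum>x\<in>S. if P x < j then c x else 0) = (\<Sum>x\<in>{1..l-1}. c x)"
    proof -
      have "(\<Sum>x\<in>S. if P x < j then c x else 0) = (\<Sum>x\<in>{x\<in>S. P x < j}. c x)"
        by (simp add: sum.inter_filter[symmetric] S_def)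
      also have "{x\<in>S. P x < j} = {1..l-1}"
      proof (rule set_eqI, rule iffI)
        fix x assume "x \<in> {x\<in>S. P x < j}"
        then have "x \<in> S" "P x < j" by auto
        moreover have "x < l" using P_mono[of l x] \<open>P x < j\<close> l1 by (cases "l \<le> x") auto
        ultimately show "x \<in> {1..l-1}" by (auto simp: S_def)
      next
        fix x assume "x \<in> {1..l-1}"
        then show "x \<in> {x\<in>S. P x < j}" using P_mono[of x "l-1"] l4 l2 by (auto simp: S_def)
      qed
      finally show ?thesis .
    qed
    then have "g j = 1 + ((-1)^(l-1) - 1)" unfolding g_def c_def alt by simp
    moreover have "(-1::real)^(l+1) = (-1)^(l-1)"
    proof -
      have "l+1 = (l-1)+2" using l3 by simp
      then show ?thesis by (simp only: power_add) simp
    qed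
    ultimately show ?thesis using \<open>\<sigma> j = _\<close> by simp
  qed
  have sig_per: "\<sigma> (x + t * int N) = \<sigma> x" for x t
    by (rule per_mult[where h=\<sigma> and p="int N"]) (rule periodic)
  define ind where "ind j l = (if j mod int N = P l mod int N then 1 else (0::real))" for j l
  define D where "D j = \<sigma> (j+1) - \<sigma> j" for j
  have D1: "D j = (\<Sum>l\<in>S. c l * ind j l)" if "1 \<le> j" "j \<le> int N" for j
  proof (cases "j < int N")
    case True
    have "D j = g (j+1) - g j" unfolding D_def using that True sig_g by simp
    also have "\<dots> = (\<Sum>l\<in>S. (if P l < j+1 then c l else 0) - (if P l < j then c l else 0))"
      unfolding g_def by (simp add: sum_subtractf)
    also have "\<dots> = (\<Sum>l\<in>S. c l * ind j l)"
    proof (rule sum.cong[OF refl])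
      fix l assume "l \<in> S"
      then have b: "0 \<le> P l" "P l \<le> int N" using P_bnd by (auto simp: S_def)
      have "ind j l = (if P l = j then 1 else 0)"
      proof (cases "P l = int N")
        case True then show ?thesis using that \<open>j < int N\<close> by (simp add: ind_def)
      next
        case False
        then have "P l mod int N = P l" using b by simp
        moreover have "j mod int N = j" using that \<open>j < int N\<close> by simp
        ultimately show ?thesis by (simp add: ind_def)
      qed
      then show "(if P l < j+1 then c l else 0) - (if P l < j then c l else 0) = c l * ind j l" by auto
    qed
    finally show ?thesis .
  next
    case False
    then have jN: "j = int N" using that by simp
    have "D j = \<sigma> 1 - \<sigma> (int N)" unfolding D_def jN using periodic[of 1] by (simp add: add.commute)
    also have "\<dots> = g 1 - g (int N) + (\<Sum>l\<in>S. c l)" using sig_g[of 1] sig_g[of "int N"] N_pos sumc by simp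
    also have "\<dots> = (\<Sum>l\<in>S. (if P l < 1 then c l else 0) - (if P l < int N then c l else 0) + c l)"
      unfolding g_def by (simp add: sum_subtractf sum.distrib)
    also have "\<dots> = (\<Sum>l\<in>S. c l * ind j l)"
    proof (rule sum.cong[OF refl])
      fix l assume "l \<in> S"
      then have b: "0 \<le> P l" "P l \<le> int N" using P_bnd by (auto simp: S_def)
      show "(if P l < 1 then c l else 0) - (if P l < int N then c l else 0) + c l = c l * ind j l"
      proof (cases "P l = 0 \<or> P l = int N")
        case True then show ?thesis using N_pos jN by (auto simp: ind_def)
      next
        case False
        then have "P l mod int N = P l" "0 < P l" "P l < int N" using b by auto
        then show ?thesis using jN by (simp add: ind_def)
      qed
    qed
    finally show ?thesis .
  qed
  have Dall: "D j = (\<Sum>l\<in>S. c l * ind j l)" for j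
  proof -
    define j' where "j' = (j - 1) mod int N + 1"
    define t where "t = (j - 1) div int N"
    have j'b: "1 \<le> j'" "j' \<le> int N"
    proof -
      have "(j-1) mod int N < int N" "0 \<le> (j-1) mod int N" using N_pos by simp_all
      then show "1 \<le> j'" "j' \<le> int N" unfolding j'_def by linarith+
    qed
    have jj: "j = j' + t * int N" unfolding j'_def t_def using div_mult_mod_eq[of "j-1" "int N"] by linarith
    have "D j = D j'" unfolding D_def jj using sig_per[of "j'+1" t] sig_per[of j' t] by (simp add: algebra_simps)
    moreover have "ind j l = ind j' l" for l unfolding ind_def jj by simp
    ultimately show ?thesis using D1[OF j'b] by simp
  qed
  have step2: "lapl (corrA N \<sigma>) f = - (\<Sum>j\<in>{0..<int N}. D j * D (j+f)) / 4" for f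
  proof -
    let ?I = "{0..<int N}"
    have sh: "(\<Sum>j\<in>?I. \<sigma> (j+1) * \<sigma> ((j+1)+a)) = corrA N \<sigma> a" for a
      unfolding corrA_def
      by (rule shift1[where h="\<lambda>j. \<sigma> j * \<sigma> (j+a)"])
         (simp_all add: periodic periodic[of "_ + a", simplified add.assoc, symmetric] add.commute add.left_commute)
    have "(\<Sum>j\<in>?I. D j * D (j+f)) = (\<Sum>j\<in>?I. \<sigma> (j+1) * \<sigma> ((j+1)+f) - \<sigma> (j+1) * \<sigma> ((j+1)+(f-1))
        - \<sigma> j * \<sigma> (j+(f+1)) + \<sigma> j * \<sigma> (j+f))"
      unfolding D_def by (rule sum.cong) (auto simp: algebra_simps)
    also have "\<dots> = corrA N \<sigma> f - corrA N \<sigma> (f-1) - corrA N \<sigma> (f+1) + corrA N \<sigma> f"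
      by (simp only: sum.distrib sum_subtractf sh) (simp add: corrA_def)
    finally show ?thesis unfolding lapl_def by simp
  qed
  have step3: "(\<Sum>j\<in>{0..<int N}. D j * D (j+f)) =
     (\<Sum>l\<in>S. \<Sum>l'\<in>S. c l * c l' * deltaF N (P l' - P l) f)" for f
  proof -
    have "(\<Sum>j\<in>{0..<int N}. D j * D (j+f)) =
        (\<Sum>j\<in>{0..<int N}. \<Sum>l\<in>S. \<Sum>l'\<in>S. (c l * ind j l) * (c l' * ind (j+f) l'))"
      unfolding Dall by (simp add: sum_product)
    also have "\<dots> = (\<Sum>l\<in>S. \<Sum>l'\<in>S. \<Sum>j\<in>{0..<int N}. (c l * ind j l) * (c l' * ind (j+f) l'))"
      by (simp add: sum.swap[of _ "{0..<int N}"])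
    also have "\<dots> = (\<Sum>l\<in>S. \<Sum>l'\<in>S. c l * c l' * (\<Sum>j\<in>{0..<int N}. ind j l * ind (j+f) l'))"
      by (simp add: sum_distrib_left mult_ac)
    also have "\<dots> = (\<Sum>l\<in>S. \<Sum>l'\<in>S. c l * c l' * deltaF N (P l' - P l) f)"
      unfolding ind_def using delta_sum[OF N_pos] by simp
    finally show ?thesis .
  qed
  define K where "K = int (2*k)"
  have K_pos: "2 \<le> K" using k_pos by (simp add: K_def)
  define Q where "Q t = int N * (t div K) + int (\<Sum>i=1..nat (t mod K). m i)" for t
  have Q_step: "Q (t+1) = Q t + int (m (cyc k (t+1)))" for t
  proof -
    define q where "q = t div K"
    define r where "r = t mod K"
    have r: "0 \<le> r" "r < K" using K_pos unfolding r_def by simp_all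
    have t: "t = q * K + r" unfolding q_def r_def by simp
    have cy: "cyc k (t+1) = nat r + 1" unfolding cyc_def r_def K_def[symmetric] using r r_def by simp
    show ?thesis
    proof (cases "r + 1 < K")
      case True
      have "(t+1) div K = q" "(t+1) mod K = r + 1" unfolding t using r True
        by (simp_all add: add.assoc div_pos_pos_trivial mod_pos_pos_trivial)
      then show ?thesis unfolding Q_def using r cy
        by (simp add: q_def[symmetric] r_def[symmetric] nat_add_distrib)
    next
      case False
      then have rK: "r + 1 = K" using r by simp
      have "(t+1) div K = q + 1" "(t+1) mod K = 0" unfolding t add.assoc rK using K_pos by simp_all
      moreover have "int N = int (\<Sum>l=1..2*k-1. m l) + int (m (2*k))"
      proof -
        have "(\<Sum>l=1..2*k. m l) = (\<Sum>l=1..2*k-1. m l) + m (2*k)"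
          using k_pos by (cases "2*k") auto
        then show ?thesis using m_sum by linarith
      qed
      moreover have "nat r = 2*k - 1" "nat r + 1 = 2*k" using rK K_def r(1) k_pos by arith+
      ultimately show ?thesis unfolding Q_def using cy m_sum
        by (simp add: q_def[symmetric] r_def[symmetric] algebra_simps)
    qed
  qed
  have Q_per: "Q (t + K) = Q t + int N" for t
    unfolding Q_def using K_pos by (simp add: algebra_simps)
  have P_Q: "P l = Q (int l)" if "l \<in> S" for l
  proof (cases "l = 2*k")
    case True then show ?thesis using PK K_pos by (simp add: Q_def K_def)
  next
    case False
    then have "int l < K" "0 \<le> int l" using that by (auto simp: S_def K_def)
    then show ?thesis by (simp add: Q_def P_def div_pos_pos_trivial mod_pos_pos_trivial)
  qed
  have seg: "segsum k m l r = Q (int l - 1 + int r) - Q (int l - 1)" for l r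
  proof (induction r)
    case 0 then show ?case by (simp add: segsum_def)
  next
    case (Suc r)
    have "segsum k m l (Suc r) = segsum k m l r + int (m (cyc k (int l + int r)))"
      by (simp add: segsum_def)
    also have "Q (int l - 1 + int (Suc r)) = Q (int l - 1 + int r) + int (m (cyc k (int l + int r)))"
      using Q_step[of "int l - 1 + int r"] by (simp add: algebra_simps)
    ultimately show ?case using Suc by simp
  qed
  have dper: "deltaF N (x - int N) f = deltaF N x f" "deltaF N (x + int N) f = deltaF N x f" for x f
    by (simp_all add: deltaF_def)
  define e where "e t = (if even t then 1 else -1::real)" for t :: int
  have eK: "e (x + K) = e x" for x unfolding e_def K_def by simp
  have e_pow: "(-1::real)^n = e (int n)" for n by (cases "even n") (auto simp: e_def)
  have e_pow2: "(-1::real)^a * (-1)^b = e (int a + int b)" for a b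
    using e_pow[of "a+b"] by (simp add: power_add)
  show ?thesis
  proof (rule ext)
    fix f
    define G where "G a b = e (a+b) * deltaF N (Q b - Q a) f" for a b
    have G1: "G (a + K) b = G a b" for a b
    proof -
      have "Q b - Q (a + K) = (Q b - Q a) - int N" unfolding Q_per by simp
      moreover have "a + K + b = (a + b) + K" by simp
      ultimately show ?thesis unfolding G_def using eK[of "a+b"] dper(1) by metis
    qed
    have G2: "G a (b + K) = G a b" for a b
    proof -
      have "Q (b + K) - Q a = (Q b - Q a) + int N" unfolding Q_per by simp
      moreover have "a + (b + K) = (a + b) + K" by simp
      ultimately show ?thesis unfolding G_def using eK[of "a+b"] dper(2) by metis
    qed
    have L: "lapl (corrA N \<sigma>) f = - (\<Sum>j\<in>{0..<K}. \<Sum>i\<in>{0..<K}. G j i)"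
    proof -
      have "lapl (corrA N \<sigma>) f = - (\<Sum>l\<in>S. \<Sum>l'\<in>S. G (int l) (int l'))"
      proof -
        have "(\<Sum>l\<in>S. \<Sum>l'\<in>S. c l * c l' * deltaF N (P l' - P l) f) = (\<Sum>l\<in>S. \<Sum>l'\<in>S. 4 * G (int l) (int l'))"
          by (intro sum.cong refl) (simp add: c_def G_def P_Q e_pow2[symmetric])
        then show ?thesis using step2 step3 by (simp add: sum_distrib_left[symmetric])
      qed
      also have "(\<Sum>l\<in>S. \<Sum>l'\<in>S. G (int l) (int l')) = (\<Sum>l\<in>S. \<Sum>i\<in>{0..<K}. G (int l) (i+1))"
        unfolding S_def K_def by (intro sum.cong refl) (rule nat_to_int)
      also have "\<dots> = (\<Sum>j\<in>{0..<K}. \<Sum>i\<in>{0..<K}. G (j+1) (i+1))"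
        unfolding S_def K_def by (rule nat_to_int)
      also have "\<dots> = (\<Sum>j\<in>{0..<K}. \<Sum>i\<in>{0..<K}. G (j+1) i)"
        by (intro sum.cong refl shift1[where h="G _"]) (use G2 K_pos in auto)
      also have "\<dots> = (\<Sum>j\<in>{0..<K}. \<Sum>i\<in>{0..<K}. G j i)"
        by (rule shift1[where h="\<lambda>j. \<Sum>i\<in>{0..<K}. G j i"]) (use G1 K_pos in auto)
      finally show ?thesis .
    qed
    have R: "(\<Sum>l=1..2*k. \<Sum>n=1..k. deltaF N (segsum k m l (2*n - 1)) f - deltaF N (segsum k m l (2*n)) f)
       = - (\<Sum>j\<in>{0..<K}. \<Sum>i\<in>{0..<K}. G j i)"
    proof -
      have "(\<Sum>l=1..2*k. \<Sum>n=1..k. deltaF N (segsum k m l (2*n - 1)) f - deltaF N (segsum k m l (2*n)) f)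
        = (\<Sum>l=1..2*k. \<Sum>r=1..2*k. (-1)^(r+1) * deltaF N (segsum k m l r) f)"
      proof (rule sum.cong[OF refl])
        fix l show "(\<Sum>n=1..k. deltaF N (segsum k m l (2*n - 1)) f - deltaF N (segsum k m l (2*n)) f) =
          (\<Sum>r=1..2*k. (-1)^(r+1) * deltaF N (segsum k m l r) f)"
          by (rule alt2[where a="\<lambda>r. deltaF N (segsum k m l r) f"])
      qed
      also have "\<dots> = (\<Sum>l=1..2*k. \<Sum>r=1..2*k. - G (int l - 1) (int l - 1 + int r))"
        by (intro sum.cong refl) (simp add: G_def seg e_pow e_def)
      also have "\<dots> = (\<Sum>j\<in>{0..<K}. \<Sum>i\<in>{0..<K}. - G j (i + (j + 1)))"
      proof -
        have "(\<Sum>l=1..2*k. \<Sum>r=1..2*k. - G (int l - 1) (int l - 1 + int r)) =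
           (\<Sum>l=1..2*k. \<Sum>i\<in>{0..<K}. - G (int l - 1) (int l - 1 + (i+1)))"
          unfolding K_def by (intro sum.cong refl) (rule nat_to_int)
        also have "\<dots> = (\<Sum>j\<in>{0..<K}. \<Sum>i\<in>{0..<K}. - G (j+1 - 1) (j+1 - 1 + (i+1)))"
          unfolding K_def by (rule nat_to_int)
        finally show ?thesis by (simp add: algebra_simps)
      qed
      also have "\<dots> = - (\<Sum>j\<in>{0..<K}. \<Sum>i\<in>{0..<K}. G j i)"
      proof -
        have "(\<Sum>i\<in>{0..<K}. G j (i + (j + 1))) = (\<Sum>i\<in>{0..<K}. G j i)" for j
          by (rule shift[where h="G j"]) (use G2 K_pos in auto)
        then show ?thesis by (simp add: sum_negf)
      qed
      finally show ?thesis .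
    qed
    show "lapl (corrA N \<sigma>) f = (\<Sum>l=1..2*k. \<Sum>n=1..k. deltaF N (segsum k m l (2*n - 1)) f - deltaF N (segsum k m l (2*n)) f)"
      using L R by simp
  qed
qed
end
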